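(* Let $\mu$ be a PU-monotone. If $A\in H_n$ and $B\in H_k$ are both neither positive semidefinite nor negative semidefinite and satisfy $\|A_+\|_\infty\geq\|B_+\|_\infty$ and $\|A_-\|_\infty\geq\|B_-\|_\infty$, then $\mu(A)\geq\mu(B)$. That is, restricted to non-definite matrices, $\mu$ is a non-decreasing function of both $\|A_+\|_\infty$ and $\|A_-\|_\infty$.
   Context: $H_n$ denotes the $n\times n$ complex Hermitian matrices. A linear map $\Phi:H_n\to H_k$ is PU if it maps positive semidefinite matrices to positive semidefinite matrices and $\Phi(\mathbb{1})=\mathbb{1}$. A function $\mu:\bigcup_{n\in\mathbb N}H_n\to\mathbb R$ is a PU-monotone if $\mu(\Phi(A))\leq\mu(A)$ for all $n,k$, all PU maps $\Phi:H_n\to H_k$ and all $A\in H_n$. Every $A$ decomposes uniquely as $A=A_+-A_-$ with $A_\pm$ positive semidefinite and $A_+A_-=0$. $\|\cdot\|_\infty$ is the operator norm. *)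

theory Defs
  imports "Jordan_Normal_Form.Matrix" Complex_Main
begin

definition herm :: "nat \<Rightarrow> complex mat set" where
  "herm n = {A. A \<in> carrier_mat n n \<and> (\<forall>i<n. \<forall>j<n. A $$ (i,j) = cnj (A $$ (j,i)))}"

definition psd :: "complex mat \<Rightarrow> bool" where
  "psd A \<longleftrightarrow> A \<in> herm (dim_row A) \<and>
     (\<forall>v \<in> carrier_vec (dim_row A). 0 \<le> Re ((A *\<^sub>v v) \<bullet>c v))"

text \<open>Positive unital linear maps H_n \<rightarrow> H_k (only the values on H_n matter).\<close>
definition PU_map :: "nat \<Rightarrow> nat \<Rightarrow> (complex mat \<Rightarrow> complex mat) \<Rightarrow> bool" where
  "PU_map n k \<Phi> \<longleftrightarrow>
     (\<forall>A \<in> herm n. \<Phi> A \<in> herm k) \<and>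
     (\<forall>A \<in> herm n. \<forall>B \<in> herm n. \<Phi> (A + B) = \<Phi> A + \<Phi> B) \<and>
     (\<forall>A \<in> herm n. \<forall>r::real. \<Phi> (complex_of_real r \<cdot>\<^sub>m A) = complex_of_real r \<cdot>\<^sub>m \<Phi> A) \<and>
     (\<forall>A \<in> herm n. psd A \<longrightarrow> psd (\<Phi> A)) \<and>
     \<Phi> (1\<^sub>m n) = 1\<^sub>m k"

definition PU_monotone :: "(complex mat \<Rightarrow> real) \<Rightarrow> bool" where
  "PU_monotone \<mu> \<longleftrightarrow>
     (\<forall>n k \<Phi> A. 0 < n \<longrightarrow> 0 < k \<longrightarrow> PU_map n k \<Phi> \<longrightarrow> A \<in> herm n \<longrightarrow> \<mu> (\<Phi> A) \<le> \<mu> A)"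

text \<open>The unique decomposition A = A_+ - A_- with A_\<plusminus> psd and A_+ A_- = 0.\<close>
definition jordan_parts :: "complex mat \<Rightarrow> complex mat \<times> complex mat" where
  "jordan_parts A = (THE (P, N). P \<in> carrier_mat (dim_row A) (dim_row A) \<and>
      N \<in> carrier_mat (dim_row A) (dim_row A) \<and> psd P \<and> psd N \<and> A = P - N \<and>
      P * N = 0\<^sub>m (dim_row A) (dim_row A))"

definition pos_part :: "complex mat \<Rightarrow> complex mat" where
  "pos_part A = fst (jordan_parts A)"

definition neg_part :: "complex mat \<Rightarrow> complex mat" where
  "neg_part A = snd (jordan_parts A)"

definition vnorm :: "complex vec \<Rightarrow> real" where
  "vnorm v = sqrt (\<Sum>i<dim_vec v. (cmod (v $ i))\<^sup>2)"

definition op_norm :: "complex mat \<Rightarrow> real" where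
  "op_norm A = Sup {vnorm (A *\<^sub>v v) | v. v \<in> carrier_vec (dim_col A) \<and> vnorm v = 1}"

end

theory Submission
  imports Defs "Jordan_Normal_Form.Schur_Decomposition"
begin


definition adj :: "complex mat \<Rightarrow> complex mat" where
  "adj A = mat (dim_col A) (dim_row A) (\<lambda>(i,j). cnj (A $$ (j,i)))"

lemma adj_carrier[simp]: "A \<in> carrier_mat n m \<Longrightarrow> adj A \<in> carrier_mat m n"
  by (auto simp: adj_def)

lemma adj_dims[simp]: "dim_row (adj A) = dim_col A" "dim_col (adj A) = dim_row A"
  by (auto simp: adj_def)

lemma adj_index[simp]: "i < dim_col A \<Longrightarrow> j < dim_row A \<Longrightarrow> adj A $$ (i,j) = cnj (A $$ (j,i))"
  by (auto simp: adj_def)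

lemma adj_adj[simp]: "adj (adj A) = A"
  by (rule eq_matI) (auto simp: adj_def)

lemma adj_mult: assumes "A \<in> carrier_mat n m" "B \<in> carrier_mat m k"
  shows "adj (A * B) = adj B * adj A"
  using assms
  by (intro eq_matI) (auto simp: adj_def scalar_prod_def row_def col_def mult_ac)

lemma adj_one[simp]: "adj (1\<^sub>m n) = 1\<^sub>m n"
  by (rule eq_matI) (auto simp: adj_def)

lemma adj_zero[simp]: "adj (0\<^sub>m n m) = 0\<^sub>m m n"
  by (rule eq_matI) (auto simp: adj_def)

lemma herm_adj: "A \<in> herm n \<longleftrightarrow> A \<in> carrier_mat n n \<and> adj A = A"
proof
  assume "A \<in> herm n"
  hence C: "A \<in> carrier_mat n n" and h: "\<And>i j. i < n \<Longrightarrow> j < n \<Longrightarrow> A $$ (i,j) = cnj (A $$ (j,i))"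
    unfolding herm_def by blast+
  have "adj A = A"
  proof (rule eq_matI)
    fix i j assume "i < dim_row A" "j < dim_col A"
    hence ij: "i < n" "j < n" using C by auto
    hence "adj A $$ (i,j) = cnj (A $$ (j,i))" using C by (simp add: carrier_matD)
    also have "\<dots> = A $$ (i,j)" using h[OF ij(2) ij(1)] by simp
    finally show "adj A $$ (i,j) = A $$ (i,j)" .
  qed (use C in auto)
  thus "A \<in> carrier_mat n n \<and> adj A = A" using C by simp
next
  assume a: "A \<in> carrier_mat n n \<and> adj A = A"
  hence C: "A \<in> carrier_mat n n" and aa: "adj A = A" by auto
  { fix i j assume ij: "i < n" "j < n"
    have "A $$ (i,j) = adj A $$ (i,j)" by (simp only: aa)
    also have "\<dots> = cnj (A $$ (j,i))" using C ij by (simp add: carrier_matD)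
    finally have "A $$ (i,j) = cnj (A $$ (j,i))" . }
  thus "A \<in> herm n" using C unfolding herm_def by blast
qed

lemma cscalar_adj: assumes A: "A \<in> carrier_mat n m" and x: "x \<in> carrier_vec m" and y: "y \<in> carrier_vec n"
  shows "(A *\<^sub>v x) \<bullet>c y = x \<bullet>c (adj A *\<^sub>v y)"
proof -
  have "(A *\<^sub>v x) \<bullet>c y = (\<Sum>i<n. (\<Sum>j<m. A $$ (i,j) * x $ j) * cnj (y $ i))"
    using A x y by (auto simp: scalar_prod_def row_def atLeast0LessThan)
  also have "\<dots> = (\<Sum>i<n. \<Sum>j<m. A $$ (i,j) * x $ j * cnj (y $ i))"
    by (simp add: sum_distrib_right)
  also have "\<dots> = (\<Sum>j<m. \<Sum>i<n. A $$ (i,j) * x $ j * cnj (y $ i))"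
    by (rule sum.swap)
  also have "\<dots> = (\<Sum>j<m. x $ j * cnj (\<Sum>i<n. cnj (A $$ (i,j)) * y $ i))"
    by (simp add: sum_distrib_left mult_ac)
  also have "\<dots> = x \<bullet>c (adj A *\<^sub>v y)"
    using A x y by (auto simp: scalar_prod_def row_def atLeast0LessThan adj_def intro!: sum.cong)
  finally show ?thesis .
qed

lemma cscalar_swap: assumes "x \<in> carrier_vec n" "y \<in> carrier_vec n"
  shows "x \<bullet>c y = cnj (y \<bullet>c x)"
  using assms by (auto simp: scalar_prod_def mult_ac)

lemma herm_cscalar: assumes "A \<in> herm n" "x \<in> carrier_vec n" "y \<in> carrier_vec n"
  shows "(A *\<^sub>v x) \<bullet>c y = x \<bullet>c (A *\<^sub>v y)"
  using assms cscalar_adj[of A n n x y] by (auto simp: herm_adj)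

lemma herm_quad_real: assumes "A \<in> herm n" "x \<in> carrier_vec n"
  shows "(A *\<^sub>v x) \<bullet>c x = complex_of_real (Re ((A *\<^sub>v x) \<bullet>c x))"
proof -
  have A: "A \<in> carrier_mat n n" using assms by (auto simp: herm_def)
  have "(A *\<^sub>v x) \<bullet>c x = x \<bullet>c (A *\<^sub>v x)" using herm_cscalar[OF assms assms(2)] .
  also have "\<dots> = cnj ((A *\<^sub>v x) \<bullet>c x)" by (rule cscalar_swap[of _ n], insert assms A, auto)
  finally have "Im ((A *\<^sub>v x) \<bullet>c x) = 0" by (metis cnj.sel(2) equal_neg_zero)
  thus ?thesis by (simp add: complex_eq_iff)
qed

lemma cscalar_self_real: "x \<bullet>c x = complex_of_real (Re (x \<bullet>c x))"
  "0 \<le> Re (x \<bullet>c x)"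
  using conjugate_square_ge_0_vec[of x] by (auto simp: less_eq_complex_def complex_eq_iff)

lemma cmod_sq_ReIm: "(cmod z)\<^sup>2 = Re z * Re z + Im z * Im z"
  by (metis cmod_power2 power2_eq_square)

lemma cscalar_self_cmod: "Re (x \<bullet>c x) = (\<Sum>i<dim_vec x. (cmod (x $ i))\<^sup>2)"
  unfolding scalar_prod_def atLeast0LessThan Re_sum by (simp add: cmod_sq_ReIm sum.distrib)

lemma vnorm_cscalar: "vnorm x = sqrt (Re (x \<bullet>c x))"
  by (simp add: vnorm_def cscalar_self_cmod)




lemma cscalar_smult_right: "dim_vec w = dim_vec v \<Longrightarrow> w \<bullet>c (k \<cdot>\<^sub>v v) = cnj k * (w \<bullet>c v)"
  by (simp add: conjugate_smult_vec)

lemma cscalar_smult_left: assumes "dim_vec w = dim_vec v" shows "(k \<cdot>\<^sub>v w) \<bullet>c v = k * (w \<bullet>c v)"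
  using assms by (simp add: scalar_prod_def sum_distrib_left mult_ac)

lemma adj_mult_index: assumes F: "F \<in> carrier_mat n k" and M: "M \<in> carrier_mat n l"
  and i: "i < k" and j: "j < l"
  shows "(adj F * M) $$ (i,j) = col M j \<bullet>c col F i"
  using assms by (auto simp: scalar_prod_def adj_def row_def col_def mult_ac intro!: sum.cong)

definition orthonormal :: "nat \<Rightarrow> complex vec list \<Rightarrow> bool" where
  "orthonormal n us \<longleftrightarrow> length us = n \<and> set us \<subseteq> carrier_vec n \<and>
     (\<forall>i<n. \<forall>j<n. us ! i \<bullet>c us ! j = (if i = j then 1 else 0))"

lemma col_mat_of_cols_nth: assumes "set us \<subseteq> carrier_vec n" "j < length us"
  shows "col (mat_of_cols n us) j = us ! j"
  using nth_mem[OF assms(2)] assms by (intro col_mat_of_cols) blast+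

lemma orthonormal_unitary: assumes "orthonormal n us"
  defines "U \<equiv> mat_of_cols n us"
  shows "U \<in> carrier_mat n n" "adj U * U = 1\<^sub>m n" "U * adj U = 1\<^sub>m n"
proof -
  have len: "length us = n" and car: "set us \<subseteq> carrier_vec n"
    and on: "\<And>i j. i < n \<Longrightarrow> j < n \<Longrightarrow> us ! i \<bullet>c us ! j = (if i = j then 1 else 0)"
    using assms unfolding orthonormal_def by auto
  show U: "U \<in> carrier_mat n n" unfolding U_def using len by auto
  have "adj U * U = 1\<^sub>m n"
  proof (rule eq_matI)
    fix i j assume ij: "i < dim_row (1\<^sub>m n :: complex mat)" "j < dim_col (1\<^sub>m n :: complex mat)"
    hence "(adj U * U) $$ (i,j) = col U j \<bullet>c col U i" using adj_mult_index[OF U U] by auto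
    also have "\<dots> = us ! j \<bullet>c us ! i" using ij len car unfolding U_def by (simp add: col_mat_of_cols_nth)
    also have "\<dots> = 1\<^sub>m n $$ (i,j)" using on[of j i] ij by auto
    finally show "(adj U * U) $$ (i,j) = 1\<^sub>m n $$ (i,j)" .
  qed (use U in auto)
  thus "adj U * U = 1\<^sub>m n" .
  thus "U * adj U = 1\<^sub>m n" using mat_mult_left_right_inverse[OF adj_carrier[OF U] U] by blast
qed

lemma unitary_cscalar: assumes U: "U \<in> carrier_mat n n" and UU: "adj U * U = 1\<^sub>m n"
  and x: "x \<in> carrier_vec n" and y: "y \<in> carrier_vec n"
  shows "(U *\<^sub>v x) \<bullet>c (U *\<^sub>v y) = x \<bullet>c y"
proof -
  have "(U *\<^sub>v x) \<bullet>c (U *\<^sub>v y) = x \<bullet>c (adj U *\<^sub>v (U *\<^sub>v y))"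
    using cscalar_adj[OF U x] U y by auto
  also have "adj U *\<^sub>v (U *\<^sub>v y) = (adj U * U) *\<^sub>v y"
    using assoc_mult_mat_vec[OF adj_carrier[OF U] U y] by simp
  also have "\<dots> = y" unfolding UU using y by simp
  finally show ?thesis .
qed

definition lift :: "complex vec \<Rightarrow> complex vec" where
  "lift y = vec (Suc (dim_vec y)) (\<lambda>i. if i = 0 then 0 else y $ (i - 1))"

lemma lift_carrier[simp]: "y \<in> carrier_vec m \<Longrightarrow> lift y \<in> carrier_vec (Suc m)"
  by (auto simp: lift_def)

lemma lift_dim[simp]: "dim_vec (lift y) = Suc (dim_vec y)"
  by (auto simp: lift_def)

lemma lift_cscalar: "dim_vec y = dim_vec z \<Longrightarrow> lift y \<bullet>c lift z = y \<bullet>c z"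
  unfolding scalar_prod_def lift_def atLeast0LessThan
  by (simp add: sum.lessThan_Suc_shift del: sum.lessThan_Suc)

lemma unit0_lift: "dim_vec y = m \<Longrightarrow> unit_vec (Suc m) 0 \<bullet>c lift y = 0"
  unfolding scalar_prod_def lift_def atLeast0LessThan
  by (simp add: sum.lessThan_Suc_shift del: sum.lessThan_Suc)

lemma lift_smult: "lift (k \<cdot>\<^sub>v y) = k \<cdot>\<^sub>v lift y"
  by (rule eq_vecI) (auto simp: lift_def)




definition nv :: "complex vec \<Rightarrow> complex vec" where
  "nv w = complex_of_real (1 / sqrt (Re (w \<bullet>c w))) \<cdot>\<^sub>v w"

lemma nv_carrier[simp]: "w \<in> carrier_vec n \<Longrightarrow> nv w \<in> carrier_vec n"
  by (simp add: nv_def)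

lemma nv_cscalar: assumes "w \<in> carrier_vec n" "w' \<in> carrier_vec n"
  shows "nv w \<bullet>c nv w' = complex_of_real (1 / sqrt (Re (w \<bullet>c w)) * (1 / sqrt (Re (w' \<bullet>c w')))) * (w \<bullet>c w')"
  using assms unfolding nv_def
  by (simp add: cscalar_smult_left cscalar_smult_right)

lemma nv_self: assumes w: "w \<in> carrier_vec n" and w0: "w \<bullet>c w \<noteq> 0"
  shows "nv w \<bullet>c nv w = 1"
proof -
  have r: "w \<bullet>c w = complex_of_real (Re (w \<bullet>c w))" by (rule cscalar_self_real)
  have pos: "Re (w \<bullet>c w) > 0" using cscalar_self_real(2)[of w] w0 r
    by (metis less_eq_real_def of_real_0)
  have "nv w \<bullet>c nv w = complex_of_real (1 / sqrt (Re (w \<bullet>c w)) * (1 / sqrt (Re (w \<bullet>c w)))) * complex_of_real (Re (w \<bullet>c w))"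
    using nv_cscalar[OF w w] r by metis
  also have "\<dots> = complex_of_real ((1 / sqrt (Re (w \<bullet>c w)) * (1 / sqrt (Re (w \<bullet>c w)))) * Re (w \<bullet>c w))"
    by simp
  also have "(1 / sqrt (Re (w \<bullet>c w)) * (1 / sqrt (Re (w \<bullet>c w)))) * Re (w \<bullet>c w) = 1"
    using pos by (simp add: field_simps)
  finally show ?thesis by simp
qed

lemma eigen_smult: fixes A :: "complex mat" assumes A: "A \<in> carrier_mat n n" and v: "v \<in> carrier_vec n"
  and Av: "A *\<^sub>v v = e \<cdot>\<^sub>v v"
  shows "A *\<^sub>v (k \<cdot>\<^sub>v v) = e \<cdot>\<^sub>v (k \<cdot>\<^sub>v v)"
  using mult_mat_vec[OF A v, of k] Av by (simp add: smult_smult_assoc mult.commute)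

lemma mat_vec_unit0: fixes F :: "complex mat" assumes F: "F \<in> carrier_mat n n" and n: "0 < n"
  shows "F *\<^sub>v unit_vec n 0 = col F 0"
proof (rule eq_vecI)
  fix i assume "i < dim_vec (col F 0)"
  hence i: "i < n" using F by simp
  have "(F *\<^sub>v unit_vec n 0) $ i = row F i \<bullet> unit_vec n 0" using F i by simp
  also have "\<dots> = row F i $ 0" by (rule scalar_prod_right_unit[OF n])
  also have "\<dots> = col F 0 $ i" using F i n by simp
  finally show "(F *\<^sub>v unit_vec n 0) $ i = col F 0 $ i" .
qed (use F in simp)

lemma spectral_vec: "A \<in> herm n \<Longrightarrow>
  \<exists>us d. orthonormal n us \<and> (\<forall>j<n. A *\<^sub>v (us ! j) = complex_of_real (d j) \<cdot>\<^sub>v (us ! j))"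
proof (induction n arbitrary: A)
  case 0
  show ?case by (rule exI[of _ "[]"]) (auto simp: orthonormal_def)
next
  case (Suc m A)
  let ?n = "Suc m"
  have A: "A \<in> carrier_mat ?n ?n" and Ah: "adj A = A" using Suc.prems herm_adj by auto
  obtain as where cp: "char_poly A = (\<Prod>a\<leftarrow>as. [:- a, 1:])" and len: "length as = ?n"
    using char_poly_factorized[OF A] by auto
  then obtain e as' where as: "as = e # as'" by (cases as) auto
  have "eigenvalue A e" unfolding eigenvalue_root_char_poly[OF A] cp as by simp
  then obtain v where ev: "eigenvector A v e" unfolding eigenvalue_def by auto
  hence v: "v \<in> carrier_vec ?n" and v0: "v \<noteq> 0\<^sub>v ?n" and Av: "A *\<^sub>v v = e \<cdot>\<^sub>v v"
    using A unfolding eigenvector_def by auto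
  have vv0: "v \<bullet>c v \<noteq> 0" using v v0 by simp
  have "e * (v \<bullet>c v) = (A *\<^sub>v v) \<bullet>c v" using Av v by (simp add: cscalar_smult_left)
  also have "\<dots> = v \<bullet>c (A *\<^sub>v v)" by (rule herm_cscalar[OF Suc.prems v v])
  also have "\<dots> = cnj e * (v \<bullet>c v)" using Av v by (simp add: cscalar_smult_right)
  finally have "e = cnj e" using vv0 by simp
  hence eR: "e = complex_of_real (Re e)" by (simp add: complex_eq_iff)
  interpret cof_vec_space ?n "TYPE(complex)" .
  define b where "b = basis_completion v"
  from basis_completion[OF v v0, folded b_def]
  have dist_b: "distinct b" and indep: "\<not> lin_dep (set b)" and b: "set b \<subseteq> carrier_vec ?n"
    and hdb: "hd b = v" and len_b: "length b = ?n" by auto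
  from hdb len_b obtain vs where bv: "b = v # vs" by (cases b, auto)
  define ws where "ws = gram_schmidt ?n b"
  from gram_schmidt_result[OF b dist_b indep refl, folded ws_def]
  have ws: "set ws \<subseteq> carrier_vec ?n" "corthogonal ws" "length ws = ?n"
    by (auto simp: len_b)
  from gram_schmidt_hd[OF v, of vs, folded bv] have hdws: "hd ws = v" unfolding ws_def .
  define fs where "fs = map nv ws"
  have fs_len: "length fs = ?n" using ws by (simp add: fs_def)
  have fs_car: "set fs \<subseteq> carrier_vec ?n" using ws by (auto simp: fs_def)
  have ws0: "ws ! 0 = v" using hdws ws(3) by (cases ws) auto
  have fs0: "fs ! 0 = nv v" using ws0 ws(3) by (simp add: fs_def)
  have fs_on: "orthonormal ?n fs"
    unfolding orthonormal_def
  proof (intro conjI allI impI)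
    fix i j assume i: "i < ?n" and j: "j < ?n"
    have wi: "ws ! i \<in> carrier_vec ?n" "ws ! j \<in> carrier_vec ?n" using ws i j by auto
    have o: "ws ! i \<bullet>c ws ! j = 0 \<longleftrightarrow> i \<noteq> j" using corthogonalD[OF ws(2)] i j ws(3) by auto
    show "fs ! i \<bullet>c fs ! j = (if i = j then 1 else 0)"
    proof (cases "i = j")
      case True
      thus ?thesis using nv_self[OF wi(1)] o i ws(3) by (simp add: fs_def)
    next
      case False
      thus ?thesis using nv_cscalar[OF wi] o i j ws(3) by (simp add: fs_def)
    qed
  qed (use fs_len fs_car in auto)
  define F where "F = mat_of_cols ?n fs"
  note Fu = orthonormal_unitary[OF fs_on, folded F_def]
  have F: "F \<in> carrier_mat ?n ?n" by (rule Fu(1))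
  have colF: "\<And>j. j < ?n \<Longrightarrow> col F j = fs ! j"
    unfolding F_def using fs_car fs_len by (simp add: col_mat_of_cols_nth)
  have Afs0: "A *\<^sub>v (fs ! 0) = e \<cdot>\<^sub>v (fs ! 0)" unfolding fs0 nv_def
    by (rule eigen_smult[OF A v Av])
  define A' where "A' = adj F * (A * F)"
  have A'c: "A' \<in> carrier_mat ?n ?n" unfolding A'_def using F A by (meson adj_carrier mult_carrier_mat)
  have "adj A' = adj (A * F) * adj (adj F)" unfolding A'_def
    by (rule adj_mult[of _ ?n ?n]) (use F A in auto)
  also have "\<dots> = (adj F * adj A) * F" using adj_mult[OF A F] by simp
  also have "\<dots> = A'" unfolding A'_def Ah using F A by (simp add: assoc_mult_mat[of _ ?n ?n _ ?n _ ?n])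
  finally have A'h: "A' \<in> herm ?n" using A'c herm_adj by blast
  have A'idx: "\<And>i j. i < ?n \<Longrightarrow> j < ?n \<Longrightarrow> A' $$ (i,j) = (A *\<^sub>v (fs ! j)) \<bullet>c (fs ! i)"
  proof -
    fix i j assume i: "i < ?n" and j: "j < ?n"
    have "A' $$ (i,j) = col (A * F) j \<bullet>c col F i" unfolding A'_def
      by (rule adj_mult_index[OF F _ i j]) (use A F in simp)
    also have "col (A * F) j = A *\<^sub>v col F j" by (rule col_mult2[OF A F j])
    finally show "A' $$ (i,j) = (A *\<^sub>v (fs ! j)) \<bullet>c (fs ! i)" using colF i j by simp
  qed
  have A'0: "\<And>i. i < ?n \<Longrightarrow> A' $$ (i,0) = (if i = 0 then e else 0)"
  proof -
    fix i assume i: "i < ?n"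
    have f: "fs ! 0 \<in> carrier_vec ?n" "fs ! i \<in> carrier_vec ?n" using fs_car fs_len i by auto
    have "A' $$ (i,0) = e * (fs ! 0 \<bullet>c fs ! i)" using A'idx[OF i] Afs0 f
      by (simp add: cscalar_smult_left)
    thus "A' $$ (i,0) = (if i = 0 then e else 0)" using fs_on i unfolding orthonormal_def by auto
  qed
  have A'herm: "\<And>i j. i < ?n \<Longrightarrow> j < ?n \<Longrightarrow> A' $$ (i,j) = cnj (A' $$ (j,i))"
    using A'h unfolding herm_def by blast
  have A'0r: "\<And>j. j < m \<Longrightarrow> A' $$ (0, Suc j) = 0"
  proof -
    fix j assume "j < m"
    hence "A' $$ (0, Suc j) = cnj (A' $$ (Suc j, 0))" by (intro A'herm) auto
    also have "\<dots> = 0" using A'0[of "Suc j"] \<open>j < m\<close> by simp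
    finally show "A' $$ (0, Suc j) = 0" .
  qed
  define A3 where "A3 = mat m m (\<lambda>(i,j). A' $$ (Suc i, Suc j))"
  have A3sym: "\<forall>i<m. \<forall>j<m. A3 $$ (i,j) = cnj (A3 $$ (j,i))"
  proof (intro allI impI)
    fix i j assume ij: "i < m" "j < m"
    have "A3 $$ (i,j) = A' $$ (Suc i, Suc j)" using ij by (simp add: A3_def)
    also have "\<dots> = cnj (A' $$ (Suc j, Suc i))" by (rule A'herm) (use ij in auto)
    also have "A' $$ (Suc j, Suc i) = A3 $$ (j,i)" using ij by (simp add: A3_def)
    finally show "A3 $$ (i,j) = cnj (A3 $$ (j,i))" .
  qed
  have A3c: "A3 \<in> carrier_mat m m" by (simp add: A3_def)
  have A3h: "A3 \<in> herm m"
    unfolding herm_def using A3sym A3c by blast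
  obtain ys d3 where ys: "orthonormal m ys"
    and ysev: "\<And>j. j < m \<Longrightarrow> A3 *\<^sub>v (ys ! j) = complex_of_real (d3 j) \<cdot>\<^sub>v (ys ! j)"
    using Suc.IH[OF A3h] by blast
  have ys_len: "length ys = m" and ys_car: "set ys \<subseteq> carrier_vec m"
    and ys_on: "\<And>i j. i < m \<Longrightarrow> j < m \<Longrightarrow> ys ! i \<bullet>c ys ! j = (if i = j then 1 else 0)"
    using ys unfolding orthonormal_def by auto
  have FA': "F * A' = A * F"
  proof -
    have "F * A' = (F * adj F) * (A * F)" unfolding A'_def
      using F A by (simp add: assoc_mult_mat[of _ ?n ?n _ ?n _ ?n])
    also have "\<dots> = A * F" unfolding Fu(3) using A F by simp
    finally show ?thesis .
  qed
  have AF: "\<And>z. z \<in> carrier_vec ?n \<Longrightarrow> A *\<^sub>v (F *\<^sub>v z) = F *\<^sub>v (A' *\<^sub>v z)"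
  proof -
    fix z :: "complex vec" assume z: "z \<in> carrier_vec ?n"
    have "A *\<^sub>v (F *\<^sub>v z) = (A * F) *\<^sub>v z" using A F z by simp
    also have "\<dots> = (F * A') *\<^sub>v z" unfolding FA' ..
    also have "\<dots> = F *\<^sub>v (A' *\<^sub>v z)" using A'c F z by simp
    finally show "A *\<^sub>v (F *\<^sub>v z) = F *\<^sub>v (A' *\<^sub>v z)" .
  qed
  have A'lift: "\<And>y. y \<in> carrier_vec m \<Longrightarrow> A' *\<^sub>v lift y = lift (A3 *\<^sub>v y)"
  proof -
    fix y :: "complex vec" assume y: "y \<in> carrier_vec m"
    show "A' *\<^sub>v lift y = lift (A3 *\<^sub>v y)"
    proof (rule eq_vecI)
      show "dim_vec (A' *\<^sub>v lift y) = dim_vec (lift (A3 *\<^sub>v y))" using A'c y by (simp add: A3_def)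
    next
      fix i assume "i < dim_vec (lift (A3 *\<^sub>v y))"
      hence i: "i < ?n" by (simp add: A3_def)
      have "(A' *\<^sub>v lift y) $ i = (\<Sum>k<?n. A' $$ (i,k) * lift y $ k)"
        using A'c y i by (simp add: scalar_prod_def row_def atLeast0LessThan)
      also have "\<dots> = (\<Sum>k<m. A' $$ (i, Suc k) * y $ k)"
        using y by (simp add: sum.lessThan_Suc_shift lift_def del: sum.lessThan_Suc)
      also have "\<dots> = lift (A3 *\<^sub>v y) $ i"
      proof (cases i)
        case 0
        thus ?thesis using A'0r by (simp add: lift_def A3_def)
      next
        case (Suc i')
        thus ?thesis using i y
          by (simp add: lift_def A3_def scalar_prod_def row_def atLeast0LessThan)
      qed
      finally show "(A' *\<^sub>v lift y) $ i = lift (A3 *\<^sub>v y) $ i" .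
    qed
  qed
  define us where "us = fs ! 0 # map (\<lambda>y. F *\<^sub>v lift y) ys"
  define d where "d = (\<lambda>j. if j = 0 then Re e else d3 (j - 1))"
  have us_len: "length us = ?n" using ys_len by (simp add: us_def)
  have f0: "fs ! 0 \<in> carrier_vec ?n" using fs_car fs_len by auto
  have us_car: "set us \<subseteq> carrier_vec ?n" using f0 ys_car F by (auto simp: us_def)
  have f0F: "fs ! 0 = F *\<^sub>v unit_vec ?n 0" using mat_vec_unit0[OF F] colF by simp
  have Fy: "\<And>y. y \<in> carrier_vec m \<Longrightarrow> fs ! 0 \<bullet>c (F *\<^sub>v lift y) = 0"
    unfolding f0F by (subst unitary_cscalar[OF F Fu(2)]) (auto simp: lift_def)
  have us_on: "orthonormal ?n us"
    unfolding orthonormal_def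
  proof (intro conjI allI impI)
    fix i j assume i: "i < ?n" and j: "j < ?n"
    show "us ! i \<bullet>c us ! j = (if i = j then 1 else 0)"
    proof (cases i)
      case 0
      show ?thesis
      proof (cases j)
        case 0
        thus ?thesis using \<open>i = 0\<close> fs_on unfolding orthonormal_def us_def by auto
      next
        case (Suc j')
        have "ys ! j' \<in> carrier_vec m" using ys_car ys_len j Suc by auto
        thus ?thesis using \<open>i = 0\<close> Suc Fy ys_len j by (simp add: us_def)
      qed
    next
      case (Suc i')
      have yi: "ys ! i' \<in> carrier_vec m" using ys_car ys_len i Suc by auto
      show ?thesis
      proof (cases j)
        case 0
        have ui: "us ! i = F *\<^sub>v lift (ys ! i')" using Suc ys_len i by (simp add: us_def)
        have uj: "us ! j = fs ! 0" using 0 by (simp add: us_def)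
        have Fl: "F *\<^sub>v lift (ys ! i') \<in> carrier_vec ?n" using F yi by simp
        have "us ! i \<bullet>c us ! j = cnj (fs ! 0 \<bullet>c (F *\<^sub>v lift (ys ! i')))"
          unfolding ui uj by (rule cscalar_swap[OF Fl f0])
        thus ?thesis using Fy[OF yi] Suc 0 by simp
      next
        case (Suc j')
        have yj: "ys ! j' \<in> carrier_vec m" using ys_car ys_len j Suc by auto
        have "us ! i \<bullet>c us ! j = lift (ys ! i') \<bullet>c lift (ys ! j')"
          using \<open>i = Suc i'\<close> Suc yi yj F ys_len i j
          by (simp add: us_def unitary_cscalar[OF F Fu(2)])
        also have "\<dots> = ys ! i' \<bullet>c ys ! j'" using yi yj by (simp add: lift_cscalar)
        finally show ?thesis using ys_on[of i' j'] \<open>i = Suc i'\<close> Suc i j by simp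
      qed
    qed
  qed (use us_len us_car in auto)
  have us_ev: "\<forall>j<?n. A *\<^sub>v (us ! j) = complex_of_real (d j) \<cdot>\<^sub>v (us ! j)"
  proof (intro allI impI)
    fix j assume j: "j < ?n"
    show "A *\<^sub>v (us ! j) = complex_of_real (d j) \<cdot>\<^sub>v (us ! j)"
    proof (cases j)
      case 0
      thus ?thesis using Afs0 eR by (simp add: us_def d_def)
    next
      case (Suc j')
      have j': "j' < m" using j Suc by simp
      have yj: "ys ! j' \<in> carrier_vec m" using ys_car ys_len j' by auto
      have "A *\<^sub>v (F *\<^sub>v lift (ys ! j')) = F *\<^sub>v lift (A3 *\<^sub>v (ys ! j'))"
        using AF[of "lift (ys ! j')"] A'lift[OF yj] yj by simp
      also have "\<dots> = F *\<^sub>v (complex_of_real (d3 j') \<cdot>\<^sub>v lift (ys ! j'))"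
        using ysev[OF j'] by (simp add: lift_smult)
      also have "\<dots> = complex_of_real (d3 j') \<cdot>\<^sub>v (F *\<^sub>v lift (ys ! j'))"
        using mult_mat_vec[OF F, of "lift (ys ! j')"] yj by simp
      finally show ?thesis using Suc j' ys_len by (simp add: us_def d_def)
    qed
  qed
  show ?case using us_on us_ev by blast
qed




definition diagm :: "nat \<Rightarrow> (nat \<Rightarrow> real) \<Rightarrow> complex mat" where
  "diagm n d = mat n n (\<lambda>(i,j). if i = j then complex_of_real (d i) else 0)"

definition sm :: "nat \<Rightarrow> complex mat \<Rightarrow> (nat \<Rightarrow> real) \<Rightarrow> complex mat" where
  "sm n U d = U * (diagm n d * adj U)"

lemma diagm_carrier[simp]: "diagm n d \<in> carrier_mat n n"
  by (simp add: diagm_def)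

lemma diagm_dims[simp]: "dim_row (diagm n d) = n" "dim_col (diagm n d) = n"
  by (simp_all add: diagm_def)

lemma col_diagm: "j < n \<Longrightarrow> col (diagm n d) j = complex_of_real (d j) \<cdot>\<^sub>v unit_vec n j"
  by (rule eq_vecI) (auto simp: diagm_def)

lemma row_diagm: "i < n \<Longrightarrow> row (diagm n d) i = complex_of_real (d i) \<cdot>\<^sub>v unit_vec n i"
  by (rule eq_vecI) (auto simp: diagm_def)

lemma mult_diagm_right: fixes U :: "complex mat" assumes U: "U \<in> carrier_mat k n"
  shows "U * diagm n d = mat k n (\<lambda>(i,j). U $$ (i,j) * complex_of_real (d j))"
proof (rule eq_matI)
  fix i j assume ij: "i < dim_row (mat k n (\<lambda>(i,j). U $$ (i,j) * complex_of_real (d j)))"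
     "j < dim_col (mat k n (\<lambda>(i,j). U $$ (i,j) * complex_of_real (d j)))"
  hence i: "i < k" and j: "j < n" by auto
  have "(U * diagm n d) $$ (i,j) = row U i \<bullet> col (diagm n d) j" using U i j by simp
  also have "\<dots> = row U i \<bullet> (complex_of_real (d j) \<cdot>\<^sub>v unit_vec n j)" using j by (simp add: col_diagm)
  also have "\<dots> = complex_of_real (d j) * (row U i \<bullet> unit_vec n j)"
    using U by (intro scalar_prod_smult_right) simp
  also have "row U i \<bullet> unit_vec n j = row U i $ j" by (rule scalar_prod_right_unit[OF j])
  also have "\<dots> = U $$ (i,j)" using U i j by simp
  finally show "(U * diagm n d) $$ (i,j) = mat k n (\<lambda>(i,j). U $$ (i,j) * complex_of_real (d j)) $$ (i,j)"
    using i j by (simp add: mult.commute)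
qed (use U in auto)

lemma mult_diagm_left: fixes U :: "complex mat" assumes U: "U \<in> carrier_mat n k"
  shows "diagm n d * U = mat n k (\<lambda>(i,j). complex_of_real (d i) * U $$ (i,j))"
proof (rule eq_matI)
  fix i j assume ij: "i < dim_row (mat n k (\<lambda>(i,j). complex_of_real (d i) * U $$ (i,j)))"
     "j < dim_col (mat n k (\<lambda>(i,j). complex_of_real (d i) * U $$ (i,j)))"
  hence i: "i < n" and j: "j < k" by auto
  have cU: "col U j \<in> carrier_vec n" using U j by simp
  have "(diagm n d * U) $$ (i,j) = row (diagm n d) i \<bullet> col U j" using U i j by simp
  also have "\<dots> = (complex_of_real (d i) \<cdot>\<^sub>v unit_vec n i) \<bullet> col U j" using i by (simp add: row_diagm)
  also have "\<dots> = complex_of_real (d i) * (unit_vec n i \<bullet> col U j)"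
    using U j by (intro scalar_prod_smult_left) simp
  also have "unit_vec n i \<bullet> col U j = col U j $ i" by (rule scalar_prod_left_unit[OF cU i])
  also have "\<dots> = U $$ (i,j)" using U i j by simp
  finally show "(diagm n d * U) $$ (i,j) = mat n k (\<lambda>(i,j). complex_of_real (d i) * U $$ (i,j)) $$ (i,j)"
    using i j by simp
qed (use U in auto)

lemma diagm_mult: "diagm n d1 * diagm n d2 = diagm n (\<lambda>i. d1 i * d2 i)"
  by (subst mult_diagm_left[OF diagm_carrier]) (rule eq_matI, auto simp: diagm_def)

lemma adj_diagm[simp]: "adj (diagm n d) = diagm n d"
  by (rule eq_matI) (auto simp: diagm_def adj_def)

lemma spectral_mat: assumes A: "A \<in> herm n"
  shows "\<exists>U d. U \<in> carrier_mat n n \<and> adj U * U = 1\<^sub>m n \<and> U * adj U = 1\<^sub>m n \<and> A = sm n U d"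
proof -
  obtain us d where on: "orthonormal n us" and ev: "\<And>j. j < n \<Longrightarrow> A *\<^sub>v (us ! j) = complex_of_real (d j) \<cdot>\<^sub>v (us ! j)"
    using spectral_vec[OF A] by blast
  define U where "U = mat_of_cols n us"
  note Uu = orthonormal_unitary[OF on, folded U_def]
  have U: "U \<in> carrier_mat n n" by (rule Uu(1))
  have Ac: "A \<in> carrier_mat n n" using A by (simp add: herm_def)
  have len: "length us = n" and car: "set us \<subseteq> carrier_vec n" using on by (auto simp: orthonormal_def)
  have colU: "\<And>j. j < n \<Longrightarrow> col U j = us ! j" unfolding U_def using car len by (simp add: col_mat_of_cols_nth)
  have AU: "A * U = U * diagm n d"
  proof (rule eq_matI)
    fix i j assume "i < dim_row (U * diagm n d)" "j < dim_col (U * diagm n d)"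
    hence i: "i < n" and j: "j < n" using U by auto
    have "(A * U) $$ (i,j) = (A *\<^sub>v col U j) $ i" using Ac U i j by simp
    also have "\<dots> = (complex_of_real (d j) \<cdot>\<^sub>v (us ! j)) $ i" using ev[OF j] colU[OF j] by simp
    also have "\<dots> = complex_of_real (d j) * U $$ (i,j)"
    proof -
      have uj: "us ! j \<in> carrier_vec n" using car len j by auto
      have "U $$ (i,j) = us ! j $ i" using i j len by (simp add: U_def mat_of_cols_index)
      thus ?thesis using uj i by simp
    qed
    also have "\<dots> = (U * diagm n d) $$ (i,j)" using mult_diagm_right[OF U, of d] i j by simp
    finally show "(A * U) $$ (i,j) = (U * diagm n d) $$ (i,j)" .
  qed (use Ac U in auto)
  have "A = A * (U * adj U)" using Uu(3) Ac by simp
  also have "\<dots> = (A * U) * adj U" using Ac U by (simp add: assoc_mult_mat[of _ n n _ n _ n])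
  also have "\<dots> = sm n U d" unfolding AU sm_def using U by (simp add: assoc_mult_mat[of _ n n _ n _ n])
  finally show ?thesis using U Uu by blast
qed




locale unit_ctx =
  fixes n :: nat and U :: "complex mat"
  assumes U: "U \<in> carrier_mat n n" and UU: "adj U * U = 1\<^sub>m n" and UU': "U * adj U = 1\<^sub>m n"
begin

lemma aU: "adj U \<in> carrier_mat n n" using U by simp

lemma Udims[simp]: "dim_row U = n" "dim_col U = n" using carrier_matD[OF U] by auto

lemma DaU[simp]: "diagm n d * adj U \<in> carrier_mat n n"
  using aU by (meson diagm_carrier mult_carrier_mat)

lemma sm_carrier[simp]: "sm n U d \<in> carrier_mat n n"
  unfolding sm_def using U aU by (meson diagm_carrier mult_carrier_mat)

lemma sm_dims[simp]: "dim_row (sm n U d) = n" "dim_col (sm n U d) = n"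
  using carrier_matD[OF sm_carrier[of d]] by auto

lemma sm_herm: "sm n U d \<in> herm n"
proof -
  have "adj (sm n U d) = adj (diagm n d * adj U) * adj U"
    unfolding sm_def by (rule adj_mult[OF U DaU])
  also have "adj (diagm n d * adj U) = U * diagm n d"
    using adj_mult[OF diagm_carrier aU, of d] by simp
  also have "(U * diagm n d) * adj U = sm n U d" unfolding sm_def using U aU
    by (simp add: assoc_mult_mat[of _ n n _ n _ n])
  finally show ?thesis using herm_adj sm_carrier by blast
qed

lemma smU: "sm n U d * U = U * diagm n d"
proof -
  have "sm n U d * U = U * (diagm n d * (adj U * U))" unfolding sm_def using U aU
    by (simp add: assoc_mult_mat[of _ n n _ n _ n])
  also have "\<dots> = U * diagm n d" unfolding UU by simp
  finally show ?thesis .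
qed

lemma col_U_carrier: "col U j \<in> carrier_vec n" using col_dim[of U j] carrier_matD(1)[OF U] by metis

lemma sm_col: assumes j: "j < n" shows "sm n U d *\<^sub>v col U j = complex_of_real (d j) \<cdot>\<^sub>v col U j"
proof -
  have "sm n U d *\<^sub>v col U j = col (sm n U d * U) j" using col_mult2[OF sm_carrier U j] by simp
  also have "\<dots> = col (U * diagm n d) j" by (simp only: smU)
  also have "\<dots> = complex_of_real (d j) \<cdot>\<^sub>v col U j"
    unfolding mult_diagm_right[OF U] by (rule eq_vecI) (use U j in auto)
  finally show ?thesis .
qed

lemma col_U_unit: assumes j: "j < n" shows "col U j \<bullet>c col U j = 1"
proof -
  have "(adj U * U) $$ (j,j) = col U j \<bullet>c col U j" by (rule adj_mult_index[OF U U j j])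
  thus ?thesis unfolding UU using j by simp
qed

lemma diagm_vec: assumes c: "c \<in> carrier_vec n"
  shows "diagm n d *\<^sub>v c = vec n (\<lambda>i. complex_of_real (d i) * c $ i)"
proof (rule eq_vecI)
  fix i assume "i < dim_vec (vec n (\<lambda>i. complex_of_real (d i) * c $ i))"
  hence i: "i < n" by simp
  have "(diagm n d *\<^sub>v c) $ i = row (diagm n d) i \<bullet> c" using i by simp
  also have "\<dots> = (complex_of_real (d i) \<cdot>\<^sub>v unit_vec n i) \<bullet> c" using i by (simp add: row_diagm)
  also have "\<dots> = complex_of_real (d i) * (unit_vec n i \<bullet> c)"
    using c by (intro scalar_prod_smult_left) simp
  also have "unit_vec n i \<bullet> c = c $ i" by (rule scalar_prod_left_unit[OF c i])
  finally show "(diagm n d *\<^sub>v c) $ i = vec n (\<lambda>i. complex_of_real (d i) * c $ i) $ i" using i by simp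
qed simp

lemma sm_vec: assumes v: "v \<in> carrier_vec n"
  shows "sm n U d *\<^sub>v v = U *\<^sub>v (diagm n d *\<^sub>v (adj U *\<^sub>v v))"
  unfolding sm_def assoc_mult_mat_vec[OF U DaU v] assoc_mult_mat_vec[OF diagm_carrier aU v] ..

lemma U_adj_vec: assumes v: "v \<in> carrier_vec n" shows "U *\<^sub>v (adj U *\<^sub>v v) = v"
proof -
  have "U *\<^sub>v (adj U *\<^sub>v v) = (U * adj U) *\<^sub>v v" using assoc_mult_mat_vec[OF U aU v] by simp
  thus ?thesis unfolding UU' using v by simp
qed

lemma self_coord: assumes v: "v \<in> carrier_vec n"
  shows "Re (v \<bullet>c v) = (\<Sum>i<n. (cmod ((adj U *\<^sub>v v) $ i))\<^sup>2)"
proof -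
  let ?c = "adj U *\<^sub>v v"
  have c: "?c \<in> carrier_vec n" using aU v by simp
  have "v \<bullet>c v = (U *\<^sub>v ?c) \<bullet>c (U *\<^sub>v ?c)" using U_adj_vec[OF v] by simp
  also have "\<dots> = ?c \<bullet>c ?c" by (rule unitary_cscalar[OF U UU c c])
  finally have "Re (v \<bullet>c v) = Re (?c \<bullet>c ?c)" by simp
  also have "\<dots> = (\<Sum>i<dim_vec ?c. (cmod (?c $ i))\<^sup>2)" by (rule cscalar_self_cmod)
  also have "dim_vec ?c = n" using c by simp
  finally show ?thesis .
qed

lemma sm_quad: assumes v: "v \<in> carrier_vec n"
  shows "Re ((sm n U d *\<^sub>v v) \<bullet>c v) = (\<Sum>i<n. d i * (cmod ((adj U *\<^sub>v v) $ i))\<^sup>2)"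
proof -
  let ?c = "adj U *\<^sub>v v"
  have c: "?c \<in> carrier_vec n" using aU v by simp
  have w: "diagm n d *\<^sub>v ?c \<in> carrier_vec n" by (rule mult_mat_vec_carrier[OF diagm_carrier c])
  have "(sm n U d *\<^sub>v v) \<bullet>c v = (diagm n d *\<^sub>v ?c) \<bullet>c ?c"
    unfolding sm_vec[OF v] by (rule cscalar_adj[OF U w v])
  also have "\<dots> = vec n (\<lambda>i. complex_of_real (d i) * ?c $ i) \<bullet>c ?c" unfolding diagm_vec[OF c] ..
  also have "\<dots> = (\<Sum>i<n. complex_of_real (d i) * (?c $ i * cnj (?c $ i)))"
    using c by (simp add: scalar_prod_def atLeast0LessThan mult.assoc)
  finally have "Re ((sm n U d *\<^sub>v v) \<bullet>c v) = (\<Sum>i<n. Re (complex_of_real (d i) * (?c $ i * cnj (?c $ i))))"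
    by (simp add: Re_sum)
  also have "\<dots> = (\<Sum>i<n. d i * (cmod (?c $ i))\<^sup>2)"
    by (rule sum.cong) (simp_all add: cmod_sq_ReIm)
  finally show ?thesis .
qed

lemma sm_normsq: assumes v: "v \<in> carrier_vec n"
  shows "Re ((sm n U d *\<^sub>v v) \<bullet>c (sm n U d *\<^sub>v v)) = (\<Sum>i<n. (d i)\<^sup>2 * (cmod ((adj U *\<^sub>v v) $ i))\<^sup>2)"
proof -
  let ?c = "adj U *\<^sub>v v"
  have c: "?c \<in> carrier_vec n" using aU v by simp
  have w: "diagm n d *\<^sub>v ?c \<in> carrier_vec n" by (rule mult_mat_vec_carrier[OF diagm_carrier c])
  have "(sm n U d *\<^sub>v v) \<bullet>c (sm n U d *\<^sub>v v) = (diagm n d *\<^sub>v ?c) \<bullet>c (diagm n d *\<^sub>v ?c)"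
    unfolding sm_vec[OF v] by (rule unitary_cscalar[OF U UU w w])
  hence "Re ((sm n U d *\<^sub>v v) \<bullet>c (sm n U d *\<^sub>v v)) = Re ((diagm n d *\<^sub>v ?c) \<bullet>c (diagm n d *\<^sub>v ?c))" by simp
  also have "\<dots> = (\<Sum>i<dim_vec (diagm n d *\<^sub>v ?c). (cmod ((diagm n d *\<^sub>v ?c) $ i))\<^sup>2)" by (rule cscalar_self_cmod)
  also have "\<dots> = (\<Sum>i<n. (cmod ((diagm n d *\<^sub>v ?c) $ i))\<^sup>2)" by simp
  also have "\<dots> = (\<Sum>i<n. (d i)\<^sup>2 * (cmod (?c $ i))\<^sup>2)"
    unfolding diagm_vec[OF c] by (rule sum.cong) (simp_all add: norm_mult power_mult_distrib)
  finally show ?thesis .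
qed

lemma sm_minus: "sm n U d1 - sm n U d2 = sm n U (\<lambda>i. d1 i - d2 i)"
proof -
  have "sm n U d1 - sm n U d2 = U * (diagm n d1 * adj U - diagm n d2 * adj U)"
    unfolding sm_def using U aU by (subst mult_minus_distrib_mat[of _ n n]) auto
  also have "diagm n d1 * adj U - diagm n d2 * adj U = (diagm n d1 - diagm n d2) * adj U"
    using aU by (subst minus_mult_distrib_mat[of _ n n]) auto
  also have "diagm n d1 - diagm n d2 = diagm n (\<lambda>i. d1 i - d2 i)"
    by (rule eq_matI) (auto simp: diagm_def)
  finally show ?thesis unfolding sm_def .
qed

lemma sm_mult: "sm n U d1 * sm n U d2 = sm n U (\<lambda>i. d1 i * d2 i)"
proof -
  have "sm n U d1 * sm n U d2 = U * (diagm n d1 * ((adj U * U) * (diagm n d2 * adj U)))"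
    unfolding sm_def using U aU by (simp add: assoc_mult_mat[of _ n n _ n _ n])
  also have "\<dots> = U * ((diagm n d1 * diagm n d2) * adj U)"
    unfolding UU using aU by (simp add: assoc_mult_mat[of _ n n _ n _ n])
  finally show ?thesis unfolding diagm_mult sm_def .
qed

lemma sm_zero: "sm n U (\<lambda>i. 0) = 0\<^sub>m n n"
proof -
  have "diagm n (\<lambda>i. 0) = 0\<^sub>m n n" by (rule eq_matI) (auto simp: diagm_def)
  thus ?thesis unfolding sm_def using U aU by simp
qed

lemma sm_uminus: "- sm n U d = sm n U (\<lambda>i. - d i)"
proof -
  have "sm n U (\<lambda>i. - d i) = sm n U (\<lambda>i. 0) - sm n U d" using sm_minus[of "\<lambda>i. 0" d] by simp
  also have "\<dots> = - sm n U d" unfolding sm_zero by (rule eq_matI) auto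
  finally show ?thesis by simp
qed

lemma sm_psd: assumes "\<And>i. i < n \<Longrightarrow> 0 \<le> d i" shows "psd (sm n U d)"
  unfolding psd_def using sm_herm assms
  by (auto simp: sm_quad intro!: sum_nonneg)

end




lemma psd_adj: assumes "psd P" "P \<in> carrier_mat n n" shows "adj P = P"
  using assms unfolding psd_def by (auto simp: herm_adj)

lemma psd_quad: assumes "psd P" "P \<in> carrier_mat n n" "v \<in> carrier_vec n"
  shows "0 \<le> Re ((P *\<^sub>v v) \<bullet>c v)"
  using assms unfolding psd_def by auto

lemma mat_minus_zero: fixes P :: "complex mat" shows "P \<in> carrier_mat n m \<Longrightarrow> P - 0\<^sub>m n m = P"
  by (rule eq_matI) auto

lemma zero_minus_mat: fixes P :: "complex mat" shows "P \<in> carrier_mat n m \<Longrightarrow> 0\<^sub>m n m - P = - P"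
  by (rule eq_matI) auto

context unit_ctx
begin

lemma jordan_unique:
  assumes P: "P \<in> carrier_mat n n" and N: "N \<in> carrier_mat n n"
    and pP: "psd P" and pN: "psd N" and A: "sm n U d = P - N" and PN: "P * N = 0\<^sub>m n n"
  shows "P = sm n U (\<lambda>i. max (d i) 0)"
proof -
  let ?A = "sm n U d"
  have aP: "adj P = P" by (rule psd_adj[OF pP P])
  have aN: "adj N = N" by (rule psd_adj[OF pN N])
  have NP: "N * P = 0\<^sub>m n n"
  proof -
    have "adj (P * N) = adj N * adj P" by (rule adj_mult[OF P N])
    thus ?thesis unfolding PN aP aN by simp
  qed
  have PA: "P * ?A = P * P"
  proof -
    have "P * ?A = P * P - P * N" unfolding A by (rule mult_minus_distrib_mat[OF P P N])
    thus ?thesis unfolding PN using mat_minus_zero[of "P * P" n n] P by simp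
  qed
  have NA: "N * ?A = - (N * N)"
  proof -
    have "N * ?A = N * P - N * N" unfolding A by (rule mult_minus_distrib_mat[OF N P N])
    thus ?thesis unfolding NP using zero_minus_mat[of "N * N" n n] N by simp
  qed
  have key: "\<And>M j. M \<in> carrier_mat n n \<Longrightarrow> adj M = M \<Longrightarrow> j < n \<Longrightarrow>
     (M *\<^sub>v (M *\<^sub>v col U j)) = (M * ?A) *\<^sub>v col U j \<Longrightarrow>
     (M *\<^sub>v col U j) \<bullet>c (M *\<^sub>v col U j) = ((M * ?A) *\<^sub>v col U j) \<bullet>c col U j"
  proof -
    fix M :: "complex mat" and j :: nat assume M: "M \<in> carrier_mat n n" and aM: "adj M = M" and j: "j < n"
      and e: "(M *\<^sub>v (M *\<^sub>v col U j)) = (M * ?A) *\<^sub>v col U j"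
    have u: "col U j \<in> carrier_vec n" by (rule col_U_carrier)
    have Mu: "M *\<^sub>v col U j \<in> carrier_vec n" using M u by simp
    have "(M *\<^sub>v (M *\<^sub>v col U j)) \<bullet>c col U j = (M *\<^sub>v col U j) \<bullet>c (adj M *\<^sub>v col U j)"
      by (rule cscalar_adj[OF M Mu u])
    thus "(M *\<^sub>v col U j) \<bullet>c (M *\<^sub>v col U j) = ((M * ?A) *\<^sub>v col U j) \<bullet>c col U j"
      unfolding aM e by simp
  qed
  have MAu: "\<And>M j. M \<in> carrier_mat n n \<Longrightarrow> j < n \<Longrightarrow>
     ((M * ?A) *\<^sub>v col U j) \<bullet>c col U j = complex_of_real (d j) * ((M *\<^sub>v col U j) \<bullet>c col U j)"
  proof -
    fix M :: "complex mat" and j :: nat assume M: "M \<in> carrier_mat n n" and j: "j < n"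
    have u: "col U j \<in> carrier_vec n" by (rule col_U_carrier)
    have "(M * ?A) *\<^sub>v col U j = M *\<^sub>v (?A *\<^sub>v col U j)"
      by (rule assoc_mult_mat_vec[OF M sm_carrier u])
    also have "\<dots> = M *\<^sub>v (complex_of_real (d j) \<cdot>\<^sub>v col U j)" using sm_col[OF j] by simp
    also have "\<dots> = complex_of_real (d j) \<cdot>\<^sub>v (M *\<^sub>v col U j)" by (rule mult_mat_vec[OF M u])
    finally show "((M * ?A) *\<^sub>v col U j) \<bullet>c col U j = complex_of_real (d j) * ((M *\<^sub>v col U j) \<bullet>c col U j)"
      using M u by (simp add: cscalar_smult_left)
  qed
  have Pcol: "\<And>j. j < n \<Longrightarrow> P *\<^sub>v col U j = complex_of_real (max (d j) 0) \<cdot>\<^sub>v col U j"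
  proof -
    fix j assume j: "j < n"
    have u: "col U j \<in> carrier_vec n" by (rule col_U_carrier)
    have Pu: "P *\<^sub>v col U j \<in> carrier_vec n" using P u by simp
    have Nu: "N *\<^sub>v col U j \<in> carrier_vec n" using N u by simp
    have eP: "P *\<^sub>v (P *\<^sub>v col U j) = (P * ?A) *\<^sub>v col U j"
      unfolding PA using assoc_mult_mat_vec[OF P P u] by simp
    have eN: "N *\<^sub>v (N *\<^sub>v col U j) = - ((N * ?A) *\<^sub>v col U j)"
      unfolding NA using assoc_mult_mat_vec[OF N N u] N u by simp
    have kP: "(P *\<^sub>v col U j) \<bullet>c (P *\<^sub>v col U j) = complex_of_real (d j) * ((P *\<^sub>v col U j) \<bullet>c col U j)"
      using key[OF P aP j eP] MAu[OF P j] by simp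
    have kN: "(N *\<^sub>v col U j) \<bullet>c (N *\<^sub>v col U j) = - (complex_of_real (d j) * ((N *\<^sub>v col U j) \<bullet>c col U j))"
    proof -
      have "(N *\<^sub>v (N *\<^sub>v col U j)) \<bullet>c col U j = (N *\<^sub>v col U j) \<bullet>c (adj N *\<^sub>v col U j)"
        by (rule cscalar_adj[OF N Nu u])
      hence "(N *\<^sub>v col U j) \<bullet>c (N *\<^sub>v col U j) = (- ((N * ?A) *\<^sub>v col U j)) \<bullet>c col U j"
        unfolding aN eN by simp
      also have "\<dots> = - (((N * ?A) *\<^sub>v col U j) \<bullet>c col U j)"
        using N u by (simp add: scalar_prod_uminus_left)
      finally show ?thesis using MAu[OF N j] by simp
    qed
    have qP: "0 \<le> Re ((P *\<^sub>v col U j) \<bullet>c col U j)" by (rule psd_quad[OF pP P u])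
    have qN: "0 \<le> Re ((N *\<^sub>v col U j) \<bullet>c col U j)" by (rule psd_quad[OF pN N u])
    have sP: "0 \<le> Re ((P *\<^sub>v col U j) \<bullet>c (P *\<^sub>v col U j))" by (rule cscalar_self_real(2))
    have sN: "0 \<le> Re ((N *\<^sub>v col U j) \<bullet>c (N *\<^sub>v col U j))" by (rule cscalar_self_real(2))
    have Au: "?A *\<^sub>v col U j = P *\<^sub>v col U j - N *\<^sub>v col U j"
      unfolding A by (rule minus_mult_distrib_mat_vec[OF P N u])
    show "P *\<^sub>v col U j = complex_of_real (max (d j) 0) \<cdot>\<^sub>v col U j"
    proof (cases "0 \<le> d j")
      case True
      have "Re ((N *\<^sub>v col U j) \<bullet>c (N *\<^sub>v col U j)) = - (d j * Re ((N *\<^sub>v col U j) \<bullet>c col U j))"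
        using kN by simp
      also have "\<dots> \<le> 0" using True qN by simp
      finally have "Re ((N *\<^sub>v col U j) \<bullet>c (N *\<^sub>v col U j)) = 0" using sN by linarith
      hence "(N *\<^sub>v col U j) \<bullet>c (N *\<^sub>v col U j) = 0"
        using cscalar_self_real(1)[of "N *\<^sub>v col U j"] by simp
      hence N0: "N *\<^sub>v col U j = 0\<^sub>v n" using Nu by simp
      have "P *\<^sub>v col U j = ?A *\<^sub>v col U j"
        unfolding Au N0 using Pu by simp
      thus ?thesis using sm_col[OF j] True by simp
    next
      case False
      have "Re ((P *\<^sub>v col U j) \<bullet>c (P *\<^sub>v col U j)) = d j * Re ((P *\<^sub>v col U j) \<bullet>c col U j)"
        using kP by simp
      also have "\<dots> \<le> 0" using False qP by (simp add: mult_nonpos_nonneg)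
      finally have "Re ((P *\<^sub>v col U j) \<bullet>c (P *\<^sub>v col U j)) = 0" using sP by linarith
      hence "(P *\<^sub>v col U j) \<bullet>c (P *\<^sub>v col U j) = 0"
        using cscalar_self_real(1)[of "P *\<^sub>v col U j"] by simp
      hence P0: "P *\<^sub>v col U j = 0\<^sub>v n" using Pu by simp
      show ?thesis unfolding P0 using False u by (auto intro!: eq_vecI)
    qed
  qed
  have PU: "P * U = U * diagm n (\<lambda>i. max (d i) 0)"
  proof (rule eq_matI)
    fix i j assume "i < dim_row (U * diagm n (\<lambda>i. max (d i) 0))" "j < dim_col (U * diagm n (\<lambda>i. max (d i) 0))"
    hence i: "i < n" and j: "j < n" by auto
    have "(P * U) $$ (i,j) = (P *\<^sub>v col U j) $ i" using P i j by simp
    also have "\<dots> = complex_of_real (max (d j) 0) * U $$ (i,j)" unfolding Pcol[OF j] using i j by simp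
    also have "\<dots> = (U * diagm n (\<lambda>i. max (d i) 0)) $$ (i,j)"
      unfolding mult_diagm_right[OF U] using i j by simp
    finally show "(P * U) $$ (i,j) = (U * diagm n (\<lambda>i. max (d i) 0)) $$ (i,j)" .
  qed (use P in auto)
  have "P = P * (U * adj U)" unfolding UU' using P by simp
  also have "\<dots> = (P * U) * adj U" using assoc_mult_mat[OF P U aU] by simp
  also have "\<dots> = sm n U (\<lambda>i. max (d i) 0)" unfolding PU sm_def
    using assoc_mult_mat[OF U diagm_carrier aU] by simp
  finally show ?thesis .
qed

lemma jordan_parts_sm: "jordan_parts (sm n U d) = (sm n U (\<lambda>i. max (d i) 0), sm n U (\<lambda>i. max (- d i) 0))"
proof -
  let ?A = "sm n U d"
  let ?P = "sm n U (\<lambda>i. max (d i) 0)"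
  let ?N = "sm n U (\<lambda>i. max (- d i) 0)"
  let ?Q = "\<lambda>(P, N). P \<in> carrier_mat (dim_row ?A) (dim_row ?A) \<and>
      N \<in> carrier_mat (dim_row ?A) (dim_row ?A) \<and> psd P \<and> psd N \<and> ?A = P - N \<and>
      P * N = 0\<^sub>m (dim_row ?A) (dim_row ?A)"
  have eq1: "(\<lambda>i. max (d i) 0 - max (- d i) 0) = d" by (rule ext) auto
  have eq2: "(\<lambda>i. max (d i) 0 * max (- d i) 0) = (\<lambda>i. 0)" by (rule ext) (auto simp: max_def)
  have eq3: "(\<lambda>i. max (d i) 0 - d i) = (\<lambda>i. max (- d i) 0)" by (rule ext) auto
  have ex: "?Q (?P, ?N)"
    using sm_psd[of "\<lambda>i. max (d i) 0"] sm_psd[of "\<lambda>i. max (- d i) 0"]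
    by (simp add: sm_minus sm_mult eq1 eq2 sm_zero)
  have un: "\<And>x. ?Q x \<Longrightarrow> x = (?P, ?N)"
  proof -
    fix x assume q: "?Q x"
    obtain P N where x: "x = (P, N)" by (cases x)
    have P: "P \<in> carrier_mat n n" and N: "N \<in> carrier_mat n n" and pP: "psd P" and pN: "psd N"
      and A: "?A = P - N" and PN: "P * N = 0\<^sub>m n n" using q unfolding x by auto
    have PP: "P = ?P" by (rule jordan_unique[OF P N pP pN A PN])
    have "N = P - ?A"
      unfolding A by (rule eq_matI) (use P N in auto)
    also have "\<dots> = ?N" unfolding PP sm_minus eq3 ..
    finally show "x = (?P, ?N)" using x PP by simp
  qed
  show ?thesis unfolding jordan_parts_def
    by (rule the_equality) (use ex un in blast)+
qed

lemma pos_part_sm: "pos_part (sm n U d) = sm n U (\<lambda>i. max (d i) 0)"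
  unfolding pos_part_def jordan_parts_sm by simp

lemma neg_part_sm: "neg_part (sm n U d) = sm n U (\<lambda>i. max (- d i) 0)"
  unfolding neg_part_def jordan_parts_sm by simp

end



lemma vnorm_smult_unit: assumes "u \<bullet>c u = 1" shows "vnorm (complex_of_real r \<cdot>\<^sub>v u) = \<bar>r\<bar>"
proof -
  have "(complex_of_real r \<cdot>\<^sub>v u) \<bullet>c (complex_of_real r \<cdot>\<^sub>v u) = complex_of_real r * (u \<bullet>c (complex_of_real r \<cdot>\<^sub>v u))"
    by (rule cscalar_smult_left) simp
  also have "u \<bullet>c (complex_of_real r \<cdot>\<^sub>v u) = cnj (complex_of_real r) * (u \<bullet>c u)"
    by (rule cscalar_smult_right) simp
  finally have e: "(complex_of_real r \<cdot>\<^sub>v u) \<bullet>c (complex_of_real r \<cdot>\<^sub>v u) = complex_of_real (r * r)"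
    using assms by simp
  show ?thesis unfolding vnorm_cscalar e Re_complex_of_real by simp
qed

context unit_ctx
begin

lemma sm_vnorm_le: assumes v: "v \<in> carrier_vec n" and m: "0 \<le> m" and b: "\<And>i. i < n \<Longrightarrow> \<bar>d i\<bar> \<le> m"
  shows "vnorm (sm n U d *\<^sub>v v) \<le> m * vnorm v"
proof -
  let ?c = "adj U *\<^sub>v v"
  have "Re ((sm n U d *\<^sub>v v) \<bullet>c (sm n U d *\<^sub>v v)) = (\<Sum>i<n. (d i)\<^sup>2 * (cmod (?c $ i))\<^sup>2)"
    by (rule sm_normsq[OF v])
  also have "\<dots> \<le> (\<Sum>i<n. m\<^sup>2 * (cmod (?c $ i))\<^sup>2)"
  proof (rule sum_mono)
    fix i assume "i \<in> {..<n}"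
    hence "\<bar>d i\<bar> \<le> m" using b by simp
    hence "\<bar>d i\<bar>\<^sup>2 \<le> m\<^sup>2" by (intro power_mono) auto
    thus "(d i)\<^sup>2 * (cmod (?c $ i))\<^sup>2 \<le> m\<^sup>2 * (cmod (?c $ i))\<^sup>2"
      by (intro mult_right_mono) auto
  qed
  also have "\<dots> = m\<^sup>2 * Re (v \<bullet>c v)" unfolding self_coord[OF v] by (simp add: sum_distrib_left)
  finally have le: "Re ((sm n U d *\<^sub>v v) \<bullet>c (sm n U d *\<^sub>v v)) \<le> m\<^sup>2 * Re (v \<bullet>c v)" .
  have "vnorm (sm n U d *\<^sub>v v) \<le> sqrt (m\<^sup>2 * Re (v \<bullet>c v))"
    unfolding vnorm_cscalar by (rule real_sqrt_le_mono[OF le])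
  also have "\<dots> = m * vnorm v" unfolding vnorm_cscalar real_sqrt_mult using m by simp
  finally show ?thesis .
qed

lemma col_U_vnorm: "j < n \<Longrightarrow> vnorm (col U j) = 1"
  unfolding vnorm_cscalar using col_U_unit by simp

lemma op_norm_le: assumes n: "0 < n" and m: "0 \<le> m" and b: "\<And>i. i < n \<Longrightarrow> \<bar>d i\<bar> \<le> m"
  shows "op_norm (sm n U d) \<le> m"
  unfolding op_norm_def sm_dims
proof (rule cSup_least)
  show "{vnorm (sm n U d *\<^sub>v v) |v. v \<in> carrier_vec n \<and> vnorm v = 1} \<noteq> {}"
    using col_U_vnorm[OF n] col_U_carrier by blast
next
  fix x assume "x \<in> {vnorm (sm n U d *\<^sub>v v) |v. v \<in> carrier_vec n \<and> vnorm v = 1}"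
  then obtain v where v: "v \<in> carrier_vec n" "vnorm v = 1" and x: "x = vnorm (sm n U d *\<^sub>v v)" by blast
  show "x \<le> m" using sm_vnorm_le[OF v(1) m b] v(2) x by simp
qed

lemma op_norm_ge: assumes j: "j < n" and m: "0 \<le> m" and b: "\<And>i. i < n \<Longrightarrow> \<bar>d i\<bar> \<le> m"
  shows "\<bar>d j\<bar> \<le> op_norm (sm n U d)"
  unfolding op_norm_def sm_dims
proof (rule cSup_upper)
  have "vnorm (sm n U d *\<^sub>v col U j) = \<bar>d j\<bar>"
    unfolding sm_col[OF j] by (rule vnorm_smult_unit[OF col_U_unit[OF j]])
  thus "\<bar>d j\<bar> \<in> {vnorm (sm n U d *\<^sub>v v) |v. v \<in> carrier_vec n \<and> vnorm v = 1}"
    using col_U_vnorm[OF j] col_U_carrier by force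
next
  show "bdd_above {vnorm (sm n U d *\<^sub>v v) |v. v \<in> carrier_vec n \<and> vnorm v = 1}"
    unfolding bdd_above_def using sm_vnorm_le[OF _ m b] by force
qed

end



lemma quad_sum: fixes M :: "complex mat" assumes M: "M \<in> carrier_mat k k" and v: "v \<in> carrier_vec k"
  shows "(M *\<^sub>v v) \<bullet>c v = (\<Sum>i<k. \<Sum>j<k. M $$ (i,j) * v $ j * cnj (v $ i))"
  using M v by (simp add: scalar_prod_def row_def atLeast0LessThan sum_distrib_right)

lemma herm_lin: assumes X: "X \<in> herm k" and Y: "Y \<in> herm k"
  shows "complex_of_real a \<cdot>\<^sub>m X + complex_of_real b \<cdot>\<^sub>m Y \<in> herm k"
proof -
  have Xc: "X \<in> carrier_mat k k" and hX: "\<And>i j. i < k \<Longrightarrow> j < k \<Longrightarrow> X $$ (i,j) = cnj (X $$ (j,i))"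
    using X unfolding herm_def by blast+
  have Yc: "Y \<in> carrier_mat k k" and hY: "\<And>i j. i < k \<Longrightarrow> j < k \<Longrightarrow> Y $$ (i,j) = cnj (Y $$ (j,i))"
    using Y unfolding herm_def by blast+
  let ?M = "complex_of_real a \<cdot>\<^sub>m X + complex_of_real b \<cdot>\<^sub>m Y"
  have Mc: "?M \<in> carrier_mat k k" using Xc Yc by simp
  have "\<forall>i<k. \<forall>j<k. ?M $$ (i,j) = cnj (?M $$ (j,i))"
  proof (intro allI impI)
    fix i j assume i: "i < k" and j: "j < k"
    have "?M $$ (i,j) = complex_of_real a * X $$ (i,j) + complex_of_real b * Y $$ (i,j)"
      using Xc Yc i j by simp
    also have "\<dots> = complex_of_real a * cnj (X $$ (j,i)) + complex_of_real b * cnj (Y $$ (j,i))"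
      by (simp only: hX[OF i j] hY[OF i j])
    also have "\<dots> = cnj (?M $$ (j,i))" using Xc Yc i j by simp
    finally show "?M $$ (i,j) = cnj (?M $$ (j,i))" .
  qed
  thus ?thesis using Mc unfolding herm_def by blast
qed

lemma quad_lin: fixes X Y :: "complex mat" assumes X: "X \<in> carrier_mat k k" and Y: "Y \<in> carrier_mat k k"
  and v: "v \<in> carrier_vec k"
  shows "((a \<cdot>\<^sub>m X + b \<cdot>\<^sub>m Y) *\<^sub>v v) \<bullet>c v = a * ((X *\<^sub>v v) \<bullet>c v) + b * ((Y *\<^sub>v v) \<bullet>c v)"
proof -
  have M: "a \<cdot>\<^sub>m X + b \<cdot>\<^sub>m Y \<in> carrier_mat k k" using X Y by simp
  show ?thesis unfolding quad_sum[OF M v] quad_sum[OF X v] quad_sum[OF Y v]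
    using X Y by (simp add: ring_distribs sum.distrib sum_distrib_left mult.assoc)
qed

lemma one_herm: "1\<^sub>m k \<in> herm k"
  unfolding herm_def by auto

theorem mainTheorem10:
  fixes \<mu> :: "complex mat \<Rightarrow> real" and A B :: "complex mat" and n k :: nat
  assumes "PU_monotone \<mu>"
    and "A \<in> herm n" and "B \<in> herm k"
    and "\<not> psd A" and "\<not> psd (- A)"
    and "\<not> psd B" and "\<not> psd (- B)"
    and "op_norm (pos_part A) \<ge> op_norm (pos_part B)"
    and "op_norm (neg_part A) \<ge> op_norm (neg_part B)"
  shows "\<mu> A \<ge> \<mu> B"
proof -
  note mono = assms(1) and Ah = assms(2) and Bh = assms(3) and npA = assms(4) and nnA = assms(5)
    and npB = assms(6) and posAB = assms(8) and negAB = assms(9)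
  have Ac: "A \<in> carrier_mat n n" using Ah unfolding herm_def by blast
  have Bc: "B \<in> carrier_mat k k" using Bh unfolding herm_def by blast
  have zero_psd: "\<And>M m. M \<in> herm m \<Longrightarrow> m = 0 \<Longrightarrow> psd M"
  proof -
    fix M :: "complex mat" and m :: nat assume M: "M \<in> herm m" and m: "m = 0"
    have Mc: "M \<in> carrier_mat 0 0" using M m unfolding herm_def by blast
    show "psd M" unfolding psd_def using M m Mc by (auto simp: scalar_prod_def)
  qed
  have n0: "0 < n" using zero_psd[OF Ah] npA by auto
  have k0: "0 < k" using zero_psd[OF Bh] npB by auto
  obtain UA dA where UA: "UA \<in> carrier_mat n n" "adj UA * UA = 1\<^sub>m n" "UA * adj UA = 1\<^sub>m n"
    and Aeq: "A = sm n UA dA" using spectral_mat[OF Ah] by blast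
  obtain UB dB where UB: "UB \<in> carrier_mat k k" "adj UB * UB = 1\<^sub>m k" "UB * adj UB = 1\<^sub>m k"
    and Beq: "B = sm k UB dB" using spectral_mat[OF Bh] by blast
  interpret a: unit_ctx n UA using UA by unfold_locales
  interpret b: unit_ctx k UB using UB by unfold_locales
  have negA: "\<exists>i<n. dA i < 0"
  proof (rule ccontr)
    assume "\<not> (\<exists>i<n. dA i < 0)"
    hence "\<And>i. i < n \<Longrightarrow> 0 \<le> dA i" by (meson not_less)
    hence "psd A" unfolding Aeq by (rule a.sm_psd)
    thus False using npA by simp
  qed
  have posA: "\<exists>i<n. 0 < dA i"
  proof (rule ccontr)
    assume "\<not> (\<exists>i<n. 0 < dA i)"
    hence "\<And>i. i < n \<Longrightarrow> 0 \<le> - dA i" by (meson not_less neg_0_le_iff_le)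
    hence "psd (- A)" unfolding Aeq a.sm_uminus by (rule a.sm_psd)
    thus False using nnA by simp
  qed
  define \<alpha> where "\<alpha> = Max (dA ` {..<n})"
  define \<beta> where "\<beta> = Min (dA ` {..<n})"
  have fin: "finite (dA ` {..<n})" "dA ` {..<n} \<noteq> {}" using n0 by auto
  obtain ja where ja: "ja < n" "dA ja = \<alpha>" using Max_in[OF fin] unfolding \<alpha>_def by auto
  obtain jb where jb: "jb < n" "dA jb = \<beta>" using Min_in[OF fin] unfolding \<beta>_def by auto
  have le\<alpha>: "\<And>i. i < n \<Longrightarrow> dA i \<le> \<alpha>" unfolding \<alpha>_def using fin by auto
  have ge\<beta>: "\<And>i. i < n \<Longrightarrow> \<beta> \<le> dA i" unfolding \<beta>_def using fin by auto
  have \<alpha>pos: "0 < \<alpha>" using posA le\<alpha> by force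
  have \<beta>neg: "\<beta> < 0" using negA ge\<beta> by force
  have opPA: "op_norm (pos_part A) \<le> \<alpha>" unfolding Aeq a.pos_part_sm
    by (rule a.op_norm_le[OF n0]) (use \<alpha>pos le\<alpha> in auto)
  have opNA: "op_norm (neg_part A) \<le> - \<beta>" unfolding Aeq a.neg_part_sm
    by (rule a.op_norm_le[OF n0]) (use \<beta>neg ge\<beta> in \<open>auto simp: max_def\<close>)
  define mB where "mB = (\<Sum>i<k. \<bar>dB i\<bar>)"
  have mB: "0 \<le> mB" "\<And>i. i < k \<Longrightarrow> \<bar>dB i\<bar> \<le> mB"
    unfolding mB_def by (auto intro!: sum_nonneg member_le_sum)
  have mBp: "\<And>i. i < k \<Longrightarrow> \<bar>max (dB i) 0\<bar> \<le> mB"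
  proof -
    fix i assume "i < k" hence h: "\<bar>dB i\<bar> \<le> mB" by (rule mB(2))
    show "\<bar>max (dB i) 0\<bar> \<le> mB" using h mB(1) by (auto simp: max_def abs_if)
  qed
  have mBn: "\<And>i. i < k \<Longrightarrow> \<bar>max (- dB i) 0\<bar> \<le> mB"
  proof -
    fix i assume "i < k" hence h: "\<bar>dB i\<bar> \<le> mB" by (rule mB(2))
    show "\<bar>max (- dB i) 0\<bar> \<le> mB" using h mB(1) by (auto simp: max_def abs_if)
  qed
  have dB_le: "\<And>i. i < k \<Longrightarrow> dB i \<le> \<alpha>"
  proof -
    fix i assume i: "i < k"
    have "\<bar>max (dB i) 0\<bar> \<le> op_norm (pos_part B)" unfolding Beq b.pos_part_sm
      by (rule b.op_norm_ge[OF i mB(1) mBp])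
    thus "dB i \<le> \<alpha>" using posAB opPA by linarith
  qed
  have dB_ge: "\<And>i. i < k \<Longrightarrow> \<beta> \<le> dB i"
  proof -
    fix i assume i: "i < k"
    have "\<bar>max (- dB i) 0\<bar> \<le> op_norm (neg_part B)" unfolding Beq b.neg_part_sm
      by (rule b.op_norm_ge[OF i mB(1) mBn])
    thus "\<beta> \<le> dB i" using negAB opNA by linarith
  qed
  have Bup: "\<And>v. v \<in> carrier_vec k \<Longrightarrow> Re ((B *\<^sub>v v) \<bullet>c v) \<le> \<alpha> * Re (v \<bullet>c v)"
  proof -
    fix v :: "complex vec" assume v: "v \<in> carrier_vec k"
    have "Re ((B *\<^sub>v v) \<bullet>c v) = (\<Sum>i<k. dB i * (cmod ((adj UB *\<^sub>v v) $ i))\<^sup>2)"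
      unfolding Beq by (rule b.sm_quad[OF v])
    also have "\<dots> \<le> (\<Sum>i<k. \<alpha> * (cmod ((adj UB *\<^sub>v v) $ i))\<^sup>2)"
      by (rule sum_mono, rule mult_right_mono) (use dB_le in auto)
    also have "\<dots> = \<alpha> * Re (v \<bullet>c v)" unfolding b.self_coord[OF v] by (simp add: sum_distrib_left)
    finally show "Re ((B *\<^sub>v v) \<bullet>c v) \<le> \<alpha> * Re (v \<bullet>c v)" .
  qed
  have Blo: "\<And>v. v \<in> carrier_vec k \<Longrightarrow> \<beta> * Re (v \<bullet>c v) \<le> Re ((B *\<^sub>v v) \<bullet>c v)"
  proof -
    fix v :: "complex vec" assume v: "v \<in> carrier_vec k"
    have "\<beta> * Re (v \<bullet>c v) = (\<Sum>i<k. \<beta> * (cmod ((adj UB *\<^sub>v v) $ i))\<^sup>2)"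
      unfolding b.self_coord[OF v] by (simp add: sum_distrib_left)
    also have "\<dots> \<le> (\<Sum>i<k. dB i * (cmod ((adj UB *\<^sub>v v) $ i))\<^sup>2)"
      by (rule sum_mono, rule mult_right_mono) (use dB_ge in auto)
    also have "\<dots> = Re ((B *\<^sub>v v) \<bullet>c v)"
      unfolding Beq by (rule b.sm_quad[OF v, symmetric])
    finally show "\<beta> * Re (v \<bullet>c v) \<le> Re ((B *\<^sub>v v) \<bullet>c v)" .
  qed
  define u where "u = col UA ja"
  define w where "w = col UA jb"
  have u: "u \<in> carrier_vec n" and w: "w \<in> carrier_vec n" unfolding u_def w_def by (rule a.col_U_carrier)+
  have uu: "u \<bullet>c u = 1" and ww: "w \<bullet>c w = 1" unfolding u_def w_def using a.col_U_unit ja jb by auto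
  have Au: "A *\<^sub>v u = complex_of_real \<alpha> \<cdot>\<^sub>v u" unfolding u_def Aeq a.sm_col[OF ja(1)] ja(2) ..
  have Aw: "A *\<^sub>v w = complex_of_real \<beta> \<cdot>\<^sub>v w" unfolding w_def Aeq a.sm_col[OF jb(1)] jb(2) ..
  define \<gamma> where "\<gamma> = 1 / (\<alpha> - \<beta>)"
  have \<gamma>pos: "0 < \<gamma>" unfolding \<gamma>_def using \<alpha>pos \<beta>neg by simp
  have \<gamma>1: "\<gamma> * (\<alpha> - \<beta>) = 1" unfolding \<gamma>_def using \<alpha>pos \<beta>neg by simp
  define P where "P = complex_of_real \<gamma> \<cdot>\<^sub>m B + complex_of_real (- \<gamma> * \<beta>) \<cdot>\<^sub>m 1\<^sub>m k"
  define Q where "Q = complex_of_real (\<gamma> * \<alpha>) \<cdot>\<^sub>m 1\<^sub>m k + complex_of_real (- \<gamma>) \<cdot>\<^sub>m B"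
  have Pc: "P \<in> carrier_mat k k" and Qc: "Q \<in> carrier_mat k k" unfolding P_def Q_def using Bc by auto
  have Ph: "P \<in> herm k" unfolding P_def by (rule herm_lin[OF Bh one_herm])
  have Qh: "Q \<in> herm k" unfolding Q_def by (rule herm_lin[OF one_herm Bh])
  have Pq: "\<And>v. v \<in> carrier_vec k \<Longrightarrow> 0 \<le> Re ((P *\<^sub>v v) \<bullet>c v)"
  proof -
    fix v :: "complex vec" assume v: "v \<in> carrier_vec k"
    have "(P *\<^sub>v v) \<bullet>c v = complex_of_real \<gamma> * ((B *\<^sub>v v) \<bullet>c v) + complex_of_real (- \<gamma> * \<beta>) * ((1\<^sub>m k *\<^sub>v v) \<bullet>c v)"
      unfolding P_def by (rule quad_lin[OF Bc one_carrier_mat v])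
    hence "Re ((P *\<^sub>v v) \<bullet>c v) = \<gamma> * Re ((B *\<^sub>v v) \<bullet>c v) - \<gamma> * (\<beta> * Re (v \<bullet>c v))"
      using v by simp
    also have "\<dots> \<ge> 0" using mult_left_mono[OF Blo[OF v], of \<gamma>] \<gamma>pos by simp
    finally show "0 \<le> Re ((P *\<^sub>v v) \<bullet>c v)" .
  qed
  have Qq: "\<And>v. v \<in> carrier_vec k \<Longrightarrow> 0 \<le> Re ((Q *\<^sub>v v) \<bullet>c v)"
  proof -
    fix v :: "complex vec" assume v: "v \<in> carrier_vec k"
    have "(Q *\<^sub>v v) \<bullet>c v = complex_of_real (\<gamma> * \<alpha>) * ((1\<^sub>m k *\<^sub>v v) \<bullet>c v) + complex_of_real (- \<gamma>) * ((B *\<^sub>v v) \<bullet>c v)"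
      unfolding Q_def by (rule quad_lin[OF one_carrier_mat Bc v])
    hence "Re ((Q *\<^sub>v v) \<bullet>c v) = \<gamma> * (\<alpha> * Re (v \<bullet>c v)) - \<gamma> * Re ((B *\<^sub>v v) \<bullet>c v)"
      using v by simp
    also have "\<dots> \<ge> 0" using mult_left_mono[OF Bup[OF v], of \<gamma>] \<gamma>pos by simp
    finally show "0 \<le> Re ((Q *\<^sub>v v) \<bullet>c v)" .
  qed
  define \<Phi> where "\<Phi> = (\<lambda>X. ((X *\<^sub>v u) \<bullet>c u) \<cdot>\<^sub>m P + ((X *\<^sub>v w) \<bullet>c w) \<cdot>\<^sub>m Q)"
  have \<Phi>c: "\<And>X. \<Phi> X \<in> carrier_mat k k" unfolding \<Phi>_def using Pc Qc by auto
  have s_add: "\<And>(X::complex mat) Y z. X \<in> carrier_mat n n \<Longrightarrow> Y \<in> carrier_mat n n \<Longrightarrow> z \<in> carrier_vec n \<Longrightarrow>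
     ((X + Y) *\<^sub>v z) \<bullet>c z = (X *\<^sub>v z) \<bullet>c z + (Y *\<^sub>v z) \<bullet>c z"
  proof -
    fix X Y :: "complex mat" and z :: "complex vec" assume X: "X \<in> carrier_mat n n" and Y: "Y \<in> carrier_mat n n" and z: "z \<in> carrier_vec n"
    have XY: "X + Y \<in> carrier_mat n n" using X Y by simp
    show "((X + Y) *\<^sub>v z) \<bullet>c z = (X *\<^sub>v z) \<bullet>c z + (Y *\<^sub>v z) \<bullet>c z"
      unfolding quad_sum[OF XY z] quad_sum[OF X z] quad_sum[OF Y z]
      using X Y by (simp add: ring_distribs sum.distrib)
  qed
  have s_smult: "\<And>(X::complex mat) (r::complex) z. X \<in> carrier_mat n n \<Longrightarrow> z \<in> carrier_vec n \<Longrightarrow>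
     ((r \<cdot>\<^sub>m X) *\<^sub>v z) \<bullet>c z = r * ((X *\<^sub>v z) \<bullet>c z)"
  proof -
    fix X :: "complex mat" and r :: complex and z :: "complex vec" assume X: "X \<in> carrier_mat n n" and z: "z \<in> carrier_vec n"
    have rX: "r \<cdot>\<^sub>m X \<in> carrier_mat n n" using X by simp
    show "((r \<cdot>\<^sub>m X) *\<^sub>v z) \<bullet>c z = r * ((X *\<^sub>v z) \<bullet>c z)"
      unfolding quad_sum[OF rX z] quad_sum[OF X z]
      using X by (simp add: sum_distrib_left mult.assoc)
  qed
  have \<Phi>herm: "\<And>X. X \<in> herm n \<Longrightarrow> \<Phi> X \<in> herm k"
  proof -
    fix X assume X: "X \<in> herm n"
    have "\<Phi> X = complex_of_real (Re ((X *\<^sub>v u) \<bullet>c u)) \<cdot>\<^sub>m P + complex_of_real (Re ((X *\<^sub>v w) \<bullet>c w)) \<cdot>\<^sub>m Q"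
      unfolding \<Phi>_def using herm_quad_real[OF X u] herm_quad_real[OF X w] by simp
    thus "\<Phi> X \<in> herm k" using herm_lin[OF Ph Qh] by simp
  qed
  have PU: "PU_map n k \<Phi>"
    unfolding PU_map_def
  proof (intro conjI ballI allI impI)
    fix X assume "X \<in> herm n" thus "\<Phi> X \<in> herm k" by (rule \<Phi>herm)
  next
    fix X Y assume X: "X \<in> herm n" and Y: "Y \<in> herm n"
    have Xc: "X \<in> carrier_mat n n" and Yc: "Y \<in> carrier_mat n n" using X Y unfolding herm_def by blast+
    show "\<Phi> (X + Y) = \<Phi> X + \<Phi> Y"
      unfolding \<Phi>_def s_add[OF Xc Yc u] s_add[OF Xc Yc w]
      by (rule eq_matI) (use Pc Qc in \<open>auto simp: ring_distribs\<close>)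
  next
    fix X and r :: real assume X: "X \<in> herm n"
    have Xc: "X \<in> carrier_mat n n" using X unfolding herm_def by blast
    show "\<Phi> (complex_of_real r \<cdot>\<^sub>m X) = complex_of_real r \<cdot>\<^sub>m \<Phi> X"
      unfolding \<Phi>_def s_smult[OF Xc u] s_smult[OF Xc w]
      by (rule eq_matI) (use Pc Qc in \<open>auto simp: ring_distribs\<close>)
  next
    fix X assume X: "X \<in> herm n" and pX: "psd X"
    have Xc: "X \<in> carrier_mat n n" using X unfolding herm_def by blast
    have su: "0 \<le> Re ((X *\<^sub>v u) \<bullet>c u)" by (rule psd_quad[OF pX Xc u])
    have sw: "0 \<le> Re ((X *\<^sub>v w) \<bullet>c w)" by (rule psd_quad[OF pX Xc w])
    have eq: "\<Phi> X = complex_of_real (Re ((X *\<^sub>v u) \<bullet>c u)) \<cdot>\<^sub>m P + complex_of_real (Re ((X *\<^sub>v w) \<bullet>c w)) \<cdot>\<^sub>m Q"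
      unfolding \<Phi>_def using herm_quad_real[OF X u] herm_quad_real[OF X w] by simp
    have "\<forall>v\<in>carrier_vec k. 0 \<le> Re ((\<Phi> X *\<^sub>v v) \<bullet>c v)"
    proof
      fix v :: "complex vec" assume v: "v \<in> carrier_vec k"
      have "Re ((\<Phi> X *\<^sub>v v) \<bullet>c v) = Re ((X *\<^sub>v u) \<bullet>c u) * Re ((P *\<^sub>v v) \<bullet>c v) + Re ((X *\<^sub>v w) \<bullet>c w) * Re ((Q *\<^sub>v v) \<bullet>c v)"
        unfolding eq quad_lin[OF Pc Qc v] by simp
      also have "\<dots> \<ge> 0" using su sw Pq[OF v] Qq[OF v] by simp
      finally show "0 \<le> Re ((\<Phi> X *\<^sub>v v) \<bullet>c v)" .
    qed
    thus "psd (\<Phi> X)" unfolding psd_def using \<Phi>herm[OF X] \<Phi>c[of X] by simp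
  next
    have s1: "(1\<^sub>m n *\<^sub>v u) \<bullet>c u = 1" using u uu by simp
    have s2: "(1\<^sub>m n *\<^sub>v w) \<bullet>c w = 1" using w ww by simp
    show "\<Phi> (1\<^sub>m n) = 1\<^sub>m k"
      unfolding \<Phi>_def s1 s2
    proof (rule eq_matI)
      fix i j assume "i < dim_row (1\<^sub>m k :: complex mat)" "j < dim_col (1\<^sub>m k :: complex mat)"
      hence i: "i < k" and j: "j < k" by auto
      have "(1 \<cdot>\<^sub>m P + 1 \<cdot>\<^sub>m Q) $$ (i,j) = complex_of_real (\<gamma> * (\<alpha> - \<beta>)) * (if i = j then 1 else 0)"
        unfolding P_def Q_def using i j Bc by (simp add: algebra_simps)
      thus "(1 \<cdot>\<^sub>m P + 1 \<cdot>\<^sub>m Q) $$ (i,j) = 1\<^sub>m k $$ (i,j)" unfolding \<gamma>1 using i j by simp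
    qed (use Pc Qc in auto)
  qed
  have \<Phi>A: "\<Phi> A = B"
  proof -
    have s1: "(A *\<^sub>v u) \<bullet>c u = complex_of_real \<alpha>" unfolding Au using u uu by (simp add: cscalar_smult_left)
    have s2: "(A *\<^sub>v w) \<bullet>c w = complex_of_real \<beta>" unfolding Aw using w ww by (simp add: cscalar_smult_left)
    show ?thesis unfolding \<Phi>_def s1 s2
    proof (rule eq_matI)
      fix i j assume "i < dim_row B" "j < dim_col B"
      hence i: "i < k" and j: "j < k" using Bc by auto
      have "(complex_of_real \<alpha> \<cdot>\<^sub>m P + complex_of_real \<beta> \<cdot>\<^sub>m Q) $$ (i,j) = complex_of_real (\<gamma> * (\<alpha> - \<beta>)) * B $$ (i,j)"
        unfolding P_def Q_def using i j Bc by (simp add: algebra_simps)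
      thus "(complex_of_real \<alpha> \<cdot>\<^sub>m P + complex_of_real \<beta> \<cdot>\<^sub>m Q) $$ (i,j) = B $$ (i,j)" unfolding \<gamma>1 by simp
    qed (use Pc Qc Bc in auto)
  qed
  have "\<mu> (\<Phi> A) \<le> \<mu> A" using mono n0 k0 PU Ah unfolding PU_monotone_def by blast
  thus ?thesis unfolding \<Phi>A .
qed


end
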